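(* For the discounted MDP $M_\theta$ and any policy $\pi$, $\mathbb E_\theta[\mathrm{Regret}_\theta(T)]\ge\mathbb E_\theta\big[\sum_{t=1}^TV^*(s_t)-\frac1{1-\gamma}\sum_{t=1}^Tr(s_t,a_t)-\frac{\gamma}{(1-\gamma)^2}\big]$.
   Context: $M_\theta$: two states $x_0,x_1$, actions $\mathcal A=\{-1,1\}^{d-1}$, rewards $r(x_0,a)=0$, $r(x_1,a)=1$, transitions $p(x_1\mid x_0,a)=1/(1+(\delta^{-1}-1)e^{-a^\top\theta})$, $p(x_0\mid x_1,a)=\delta$ (remaining mass on staying), with $\delta=1-\gamma$, discount factor $\gamma\in(0,1)$, and $\theta\in\mathbb R^{d-1}$. A (history-dependent) policy $\pi$ is run from $s_1=x_0$; $\mathbb E_\theta$ is expectation over the resulting trajectory. $V^\pi_t(s)=\mathbb E[\sum_{i\ge0}\gamma^ir(s_{t+i},a_{t+i})\mid s_t=s]$ (given the history), $V^*$ is the optimal discounted value function, and $\mathrm{Regret}_\theta(T)=\sum_{t=1}^TV^*(s_t)-\sum_{t=1}^TV^\pi_t(s_t)$. *)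

theory Defs
  imports "HOL-Probability.Probability"
begin

text \<open>States: False = x0, True = x1.
  A history-dependent (possibly randomized) policy maps the list of completed
  (state, action) pairs together with the current state to a distribution over actions.\<close>

type_synonym act = "real list"
type_synonym hist = "(bool \<times> act) list"
type_synonym policy = "hist \<Rightarrow> bool \<Rightarrow> act pmf"

definition actions :: "nat \<Rightarrow> act set" where
  "actions d = {a. length a = d - 1 \<and> (\<forall>x\<in>set a. x = -1 \<or> x = 1)}"

definition inner_list :: "real list \<Rightarrow> real list \<Rightarrow> real" where
  "inner_list a b = sum_list (map2 (*) a b)"

definition rew :: "bool \<Rightarrow> act \<Rightarrow> real" where
  "rew s a = (if s then 1 else 0)"

text \<open>delta = 1 - gamma\<close>
definition trans :: "real list \<Rightarrow> real \<Rightarrow> bool \<Rightarrow> act \<Rightarrow> bool pmf" where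
  "trans \<theta> \<gamma> s a =
     (if s then bernoulli_pmf (1 - (1 - \<gamma>))
      else bernoulli_pmf (1 / (1 + (1 / (1 - \<gamma>) - 1) * exp (- inner_list a \<theta>))))"

definition valid_policy :: "nat \<Rightarrow> policy \<Rightarrow> bool" where
  "valid_policy d \<pi> \<longleftrightarrow> (\<forall>h s. set_pmf (\<pi> h s) \<subseteq> actions d)"

definition step :: "real list \<Rightarrow> real \<Rightarrow> policy \<Rightarrow> hist \<times> bool \<Rightarrow> (hist \<times> bool) pmf" where
  "step \<theta> \<gamma> \<pi> hs = (case hs of (h, s) \<Rightarrow>
      bind_pmf (\<pi> h s) (\<lambda>a. map_pmf (\<lambda>s'. (h @ [(s, a)], s')) (trans \<theta> \<gamma> s a)))"

primrec run :: "real list \<Rightarrow> real \<Rightarrow> policy \<Rightarrow> nat \<Rightarrow> hist \<times> bool \<Rightarrow> (hist \<times> bool) pmf" where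
  "run \<theta> \<gamma> \<pi> 0 hs = return_pmf hs"
| "run \<theta> \<gamma> \<pi> (Suc n) hs = bind_pmf (run \<theta> \<gamma> \<pi> n hs) (step \<theta> \<gamma> \<pi>)"

definition Vpi :: "real list \<Rightarrow> real \<Rightarrow> policy \<Rightarrow> hist \<Rightarrow> bool \<Rightarrow> real" where
  "Vpi \<theta> \<gamma> \<pi> h s =
     (\<Sum>i. \<gamma> ^ i * measure_pmf.expectation (run \<theta> \<gamma> \<pi> i (h, s))
              (\<lambda>(h', s'). measure_pmf.expectation (\<pi> h' s') (\<lambda>a. rew s' a)))"

definition Vstar :: "nat \<Rightarrow> real list \<Rightarrow> real \<Rightarrow> bool \<Rightarrow> real" where
  "Vstar d \<theta> \<gamma> s = (SUP \<pi>\<in>{\<pi>. valid_policy d \<pi>}. Vpi \<theta> \<gamma> \<pi> [] s)"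

text \<open>Regret_theta(T) along a trajectory whose first T steps are
  h = [(s_1,a_1),...,(s_T,a_T)]; V_t^pi(s_t) is evaluated given history take (t-1) h.\<close>
definition regret :: "nat \<Rightarrow> real list \<Rightarrow> real \<Rightarrow> policy \<Rightarrow> nat \<Rightarrow> hist \<Rightarrow> real" where
  "regret d \<theta> \<gamma> \<pi> T h =
     (\<Sum>t<T. Vstar d \<theta> \<gamma> (fst (h ! t))) - (\<Sum>t<T. Vpi \<theta> \<gamma> \<pi> (take t h) (fst (h ! t)))"

end

theory Submission
  imports Defs
begin

lemma integral_bind_pmf_bdd:
  fixes f :: "_ \<Rightarrow> real"
  assumes "\<And>x. \<bar>f x\<bar> \<le> B"
  shows "measure_pmf.expectation (bind_pmf p q) f = measure_pmf.expectation p (\<lambda>x. measure_pmf.expectation (q x) f)"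
  unfolding measure_pmf_bind
  apply (rule integral_bind[where K="count_space UNIV" and B=B and B'=1])
  using assms by (auto simp: measure_pmf.emeasure_space_1 space_subprob_algebra subprob_space_measure_pmf)

lemma pmf_integrable_bdd:
  fixes f :: "_ \<Rightarrow> real"
  assumes "\<And>x. \<bar>f x\<bar> \<le> B"
  shows "integrable (measure_pmf p) f"
  by (rule measure_pmf.integrable_const_bound[where B=B]) (use assms in auto)

lemma exp_const: "measure_pmf.expectation p (\<lambda>x. (c::real)) = c"
  by simp

lemma exp_le:
  fixes f :: "_ \<Rightarrow> real"
  assumes "\<And>x. \<bar>f x\<bar> \<le> B" "\<And>x. f x \<le> C"
  shows "measure_pmf.expectation p f \<le> C"
proof -
  have "measure_pmf.expectation p f \<le> measure_pmf.expectation p (\<lambda>x. C)"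
    by (rule integral_mono) (use assms pmf_integrable_bdd[OF assms(1)] in auto)
  then show ?thesis by simp
qed

lemma exp_ge:
  fixes f :: "_ \<Rightarrow> real"
  assumes "\<And>x. 0 \<le> f x"
  shows "0 \<le> measure_pmf.expectation p f"
  using assms by (simp add: Bochner_Integration.integral_nonneg)

lemma run_add: "run \<theta> \<gamma> \<pi> (m + n) x = bind_pmf (run \<theta> \<gamma> \<pi> m x) (run \<theta> \<gamma> \<pi> n)"
proof (induction n)
  case 0
  then show ?case by (simp add: bind_return_pmf')
next
  case (Suc n)
  then show ?case by (simp add: bind_assoc_pmf)
qed

lemma step_set: "(h', s') \<in> set_pmf (step \<theta> \<gamma> \<pi> (h1, s1)) \<Longrightarrow> \<exists>a. h' = h1 @ [(s1, a)]"
  unfolding step_def by auto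

lemma run_set:
  "(h', s') \<in> set_pmf (run \<theta> \<gamma> \<pi> n (h, s)) \<Longrightarrow>
     length h' = length h + n \<and> take (length h) h' = h \<and> (0 < n \<longrightarrow> fst (h' ! length h) = s)
     \<and> (n = 0 \<longrightarrow> s' = s)"
proof (induction n arbitrary: h' s')
  case 0
  then show ?case by simp
next
  case (Suc n)
  from Suc.prems obtain h1 s1 where h1: "(h1, s1) \<in> set_pmf (run \<theta> \<gamma> \<pi> n (h, s))"
    and st: "(h', s') \<in> set_pmf (step \<theta> \<gamma> \<pi> (h1, s1))" by auto
  from step_set[OF st] obtain a where ha: "h' = h1 @ [(s1, a)]" by blast
  from Suc.IH[OF h1] have IH: "length h1 = length h + n" "take (length h) h1 = h"
    "0 < n \<longrightarrow> fst (h1 ! length h) = s" "n = 0 \<longrightarrow> s1 = s" by auto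
  show ?case
  proof (cases n)
    case 0
    then show ?thesis using IH ha by (simp add: nth_append)
  next
    case (Suc m)
    then show ?thesis using IH ha by (simp add: nth_append)
  qed
qed

lemma marginal:
  assumes "t < T"
  shows "map_pmf (\<lambda>y. (take t (fst y), fst (fst y ! t))) (run \<theta> \<gamma> \<pi> T ([], False))
         = run \<theta> \<gamma> \<pi> t ([], False)"
proof -
  have T: "T = t + (T - t)" using assms by simp
  have "map_pmf (\<lambda>y. (take t (fst y), fst (fst y ! t))) (run \<theta> \<gamma> \<pi> T ([], False))
      = bind_pmf (run \<theta> \<gamma> \<pi> t ([], False))
          (\<lambda>x. map_pmf (\<lambda>y. (take t (fst y), fst (fst y ! t))) (run \<theta> \<gamma> \<pi> (T - t) x))"
    by (subst T, subst run_add) (simp add: map_bind_pmf)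
  also have "\<dots> = bind_pmf (run \<theta> \<gamma> \<pi> t ([], False)) return_pmf"
  proof (rule bind_pmf_cong[OF refl])
    fix x assume x: "x \<in> set_pmf (run \<theta> \<gamma> \<pi> t ([], False))"
    obtain h s where xe: "x = (h, s)" by (cases x)
    have lh: "length h = t" using run_set[of h s \<theta> \<gamma> \<pi> t "[]" False] x xe by simp
    have "map_pmf (\<lambda>y. (take t (fst y), fst (fst y ! t))) (run \<theta> \<gamma> \<pi> (T - t) x)
        = map_pmf (\<lambda>_. x) (run \<theta> \<gamma> \<pi> (T - t) x)"
    proof (rule map_pmf_cong[OF refl])
      fix y assume y: "y \<in> set_pmf (run \<theta> \<gamma> \<pi> (T - t) x)"
      obtain h' s' where ye: "y = (h', s')" by (cases y)
      from run_set[of h' s' \<theta> \<gamma> \<pi> "T - t" h s] y ye xe lh assms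
      show "(take t (fst y), fst (fst y ! t)) = x" by (simp add: ye xe)
    qed
    then show "map_pmf (\<lambda>y. (take t (fst y), fst (fst y ! t))) (run \<theta> \<gamma> \<pi> (T - t) x) = return_pmf x"
      by simp
  qed
  also have "\<dots> = run \<theta> \<gamma> \<pi> t ([], False)" by (simp add: bind_return_pmf')
  finally show ?thesis .
qed

lemma exp_marg:
  fixes f :: "hist \<Rightarrow> bool \<Rightarrow> real"
  assumes "t < T"
  shows "measure_pmf.expectation (run \<theta> \<gamma> \<pi> T ([], False)) (\<lambda>y. f (take t (fst y)) (fst (fst y ! t)))
       = measure_pmf.expectation (run \<theta> \<gamma> \<pi> t ([], False)) (\<lambda>y. f (fst y) (snd y))"
proof -
  have "measure_pmf.expectation (run \<theta> \<gamma> \<pi> t ([], False)) (\<lambda>y. f (fst y) (snd y))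
     = measure_pmf.expectation (map_pmf (\<lambda>y. (take t (fst y), fst (fst y ! t))) (run \<theta> \<gamma> \<pi> T ([], False))) (\<lambda>y. f (fst y) (snd y))"
    using marginal[OF assms] by simp
  also have "\<dots> = measure_pmf.expectation (run \<theta> \<gamma> \<pi> T ([], False)) (\<lambda>y. f (take t (fst y)) (fst (fst y ! t)))"
    by simp
  finally show ?thesis by simp
qed

definition ind :: "bool \<Rightarrow> real" where "ind s = (if s then 1 else 0)"

definition EE :: "real list \<Rightarrow> real \<Rightarrow> policy \<Rightarrow> nat \<Rightarrow> hist \<times> bool \<Rightarrow> real" where
  "EE \<theta> \<gamma> \<pi> n x = measure_pmf.expectation (run \<theta> \<gamma> \<pi> n x) (\<lambda>y. ind (snd y))"

lemma ind_bdd: "\<bar>ind s\<bar> \<le> 1" "0 \<le> ind s" "ind s \<le> 1"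
  by (auto simp: ind_def)

lemma EE_bdd: "0 \<le> EE \<theta> \<gamma> \<pi> n x" "EE \<theta> \<gamma> \<pi> n x \<le> 1" "\<bar>EE \<theta> \<gamma> \<pi> n x\<bar> \<le> 1"
proof -
  show a: "0 \<le> EE \<theta> \<gamma> \<pi> n x" unfolding EE_def by (rule exp_ge) (simp add: ind_bdd)
  show b: "EE \<theta> \<gamma> \<pi> n x \<le> 1" unfolding EE_def by (rule exp_le[where B=1]) (auto simp: ind_bdd)
  show "\<bar>EE \<theta> \<gamma> \<pi> n x\<bar> \<le> 1" using a b by simp
qed

lemma Vpi_eq: "Vpi \<theta> \<gamma> \<pi> h s = (\<Sum>i. \<gamma> ^ i * EE \<theta> \<gamma> \<pi> i (h, s))"
  unfolding Vpi_def EE_def rew_def ind_def by (simp add: split_def)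

context
  fixes \<gamma> :: real
  assumes g0: "0 < \<gamma>" and g1: "\<gamma> < 1"
begin

lemma summ_geo: "summable (\<lambda>i. \<gamma> ^ i * a i)" if "\<And>i. \<bar>a i\<bar> \<le> 1" for a
proof (rule summable_comparison_test[where g="\<lambda>i. \<gamma> ^ i"])
  show "\<exists>N. \<forall>n\<ge>N. norm (\<gamma> ^ n * a n) \<le> \<gamma> ^ n"
    using that g0 by (auto simp: abs_mult intro!: mult_left_le)
  show "summable (\<lambda>i. \<gamma> ^ i)" using g0 g1 by (simp add: summable_geometric)
qed

lemma sum_geo_bdd:
  assumes "\<And>i. 0 \<le> a i" "\<And>i. a i \<le> 1"
  shows "0 \<le> (\<Sum>i. \<gamma> ^ i * a i)" "(\<Sum>i. \<gamma> ^ i * a i) \<le> 1 / (1 - \<gamma>)"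
proof -
  have ab: "\<And>i. \<bar>a i\<bar> \<le> 1" using assms by (simp add: abs_le_iff)
  have s: "summable (\<lambda>i. \<gamma> ^ i * a i)" by (rule summ_geo[OF ab])
  show "0 \<le> (\<Sum>i. \<gamma> ^ i * a i)" using g0 assms by (intro suminf_nonneg[OF s]) simp
  have "(\<Sum>i. \<gamma> ^ i * a i) \<le> (\<Sum>i. \<gamma> ^ i)"
    using g0 g1 assms by (intro suminf_le[OF _ s]) (auto intro!: mult_left_le simp: summable_geometric)
  also have "\<dots> = 1 / (1 - \<gamma>)" using g0 g1 by (simp add: suminf_geometric)
  finally show "(\<Sum>i. \<gamma> ^ i * a i) \<le> 1 / (1 - \<gamma>)" .
qed

lemma Vpi_bdd: "0 \<le> Vpi \<theta> \<gamma> \<pi> h s" "Vpi \<theta> \<gamma> \<pi> h s \<le> 1 / (1 - \<gamma>)"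
  "\<bar>Vpi \<theta> \<gamma> \<pi> h s\<bar> \<le> 1 / (1 - \<gamma>)"
proof -
  show a: "0 \<le> Vpi \<theta> \<gamma> \<pi> h s" unfolding Vpi_eq by (rule sum_geo_bdd) (auto simp: EE_bdd)
  show b: "Vpi \<theta> \<gamma> \<pi> h s \<le> 1 / (1 - \<gamma>)" unfolding Vpi_eq by (rule sum_geo_bdd) (auto simp: EE_bdd)
  show "\<bar>Vpi \<theta> \<gamma> \<pi> h s\<bar> \<le> 1 / (1 - \<gamma>)" using a b by simp
qed

lemma exp_Vpi:
  "measure_pmf.expectation (run \<theta> \<gamma> \<pi> t x) (\<lambda>y. Vpi \<theta> \<gamma> \<pi> (fst y) (snd y))
     = (\<Sum>i. \<gamma> ^ i * EE \<theta> \<gamma> \<pi> (t + i) x)"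
proof -
  let ?f = "\<lambda>i y. \<gamma> ^ i * EE \<theta> \<gamma> \<pi> i y"
  have int: "integrable (measure_pmf (run \<theta> \<gamma> \<pi> t x)) (?f i)" for i
    by (rule pmf_integrable_bdd[where B="\<gamma>^i"]) (use g0 in \<open>auto simp: abs_mult EE_bdd intro!: mult_left_le\<close>)
  have "measure_pmf.expectation (run \<theta> \<gamma> \<pi> t x) (\<lambda>y. Vpi \<theta> \<gamma> \<pi> (fst y) (snd y))
      = measure_pmf.expectation (run \<theta> \<gamma> \<pi> t x) (\<lambda>y. \<Sum>i. ?f i y)"
    by (simp add: Vpi_eq)
  also have "\<dots> = (\<Sum>i. measure_pmf.expectation (run \<theta> \<gamma> \<pi> t x) (?f i))"
  proof (rule integral_suminf)
    show "integrable (measure_pmf (run \<theta> \<gamma> \<pi> t x)) (?f i)" for i by (rule int)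
    show "AE y in measure_pmf (run \<theta> \<gamma> \<pi> t x). summable (\<lambda>i. norm (?f i y))"
      using g0 by (intro AE_I2, simp add: abs_mult EE_bdd summ_geo)
    have "summable (\<lambda>i. \<gamma> ^ i * measure_pmf.expectation (run \<theta> \<gamma> \<pi> t x) (\<lambda>y. EE \<theta> \<gamma> \<pi> i y))"
    proof (rule summ_geo)
      fix i
      have "0 \<le> measure_pmf.expectation (run \<theta> \<gamma> \<pi> t x) (\<lambda>y. EE \<theta> \<gamma> \<pi> i y)"
        by (rule exp_ge) (simp add: EE_bdd)
      moreover have "measure_pmf.expectation (run \<theta> \<gamma> \<pi> t x) (\<lambda>y. EE \<theta> \<gamma> \<pi> i y) \<le> 1"
        by (rule exp_le[where B=1]) (simp_all add: EE_bdd)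
      ultimately show "\<bar>measure_pmf.expectation (run \<theta> \<gamma> \<pi> t x) (\<lambda>y. EE \<theta> \<gamma> \<pi> i y)\<bar> \<le> 1" by simp
    qed
    then show "summable (\<lambda>i. measure_pmf.expectation (run \<theta> \<gamma> \<pi> t x) (\<lambda>y. norm (?f i y)))"
      using g0 by (simp add: abs_mult EE_bdd)
  qed
  also have "\<dots> = (\<Sum>i. \<gamma> ^ i * EE \<theta> \<gamma> \<pi> (t + i) x)"
  proof (rule arg_cong[where f=suminf], rule ext)
    fix i
    have "measure_pmf.expectation (run \<theta> \<gamma> \<pi> t x) (\<lambda>y. EE \<theta> \<gamma> \<pi> i y) = EE \<theta> \<gamma> \<pi> (t + i) x"
      unfolding EE_def run_add
      by (rule integral_bind_pmf_bdd[symmetric, where B=1]) (simp add: ind_bdd)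
    then show "measure_pmf.expectation (run \<theta> \<gamma> \<pi> t x) (?f i) = \<gamma> ^ i * EE \<theta> \<gamma> \<pi> (t + i) x"
      by simp
  qed
  finally show ?thesis .
qed

end
lemma final_ineq:
  fixes q S :: "nat \<Rightarrow> real" and \<gamma> :: real
  assumes g0: "0 < \<gamma>" and g1: "\<gamma> < 1"
    and rec: "\<And>t. S t = q t + \<gamma> * S (Suc t)"
    and S0: "\<And>t. 0 \<le> S t" and S1: "\<And>t. S t \<le> 1 / (1 - \<gamma>)"
  shows "(\<Sum>t<T. S t) \<le> 1 / (1 - \<gamma>) * (\<Sum>t<T. q t) + \<gamma> / (1 - \<gamma>)^2"
proof -
  define A where "A = (\<Sum>t<T. S t)"
  define Q where "Q = (\<Sum>t<T. q t)"
  have sh: "(\<Sum>t<T. S (Suc t)) = A - S 0 + S T"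
    unfolding A_def by (induction T) auto
  have "A = (\<Sum>t<T. q t + \<gamma> * S (Suc t))"
    unfolding A_def by (rule sum.cong[OF refl], rule rec)
  then have "A = Q + \<gamma> * (\<Sum>t<T. S (Suc t))"
    unfolding Q_def by (simp add: sum.distrib sum_distrib_left)
  then have "A = Q + \<gamma> * (A - S 0 + S T)" using sh by simp
  moreover have "\<gamma> * S 0 \<ge> 0" using g0 S0 by simp
  moreover have "\<gamma> * S T \<le> \<gamma> * (1 / (1 - \<gamma>))" using g0 S1 by (intro mult_left_mono) auto
  ultimately have "(1 - \<gamma>) * A \<le> Q + \<gamma> / (1 - \<gamma>)" by (simp add: algebra_simps)
  then have "A \<le> (Q + \<gamma> / (1 - \<gamma>)) / (1 - \<gamma>)" using g1 by (subst pos_le_divide_eq) (auto simp: mult.commute)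
  also have "\<dots> = 1 / (1 - \<gamma>) * Q + \<gamma> / (1 - \<gamma>)^2" by (simp add: add_divide_distrib power2_eq_square)
  finally show ?thesis unfolding A_def Q_def .
qed

lemma S_rec:
  fixes \<gamma> :: real
  assumes "0 < \<gamma>" "\<gamma> < 1"
  shows "(\<Sum>i. \<gamma> ^ i * EE \<theta> \<gamma> \<pi> (t + i) x)
       = EE \<theta> \<gamma> \<pi> t x + \<gamma> * (\<Sum>i. \<gamma> ^ i * EE \<theta> \<gamma> \<pi> (Suc t + i) x)"
proof -
  have s: "summable (\<lambda>i. \<gamma> ^ i * EE \<theta> \<gamma> \<pi> (t + i) x)"
    by (rule summ_geo[OF assms]) (simp add: EE_bdd)
  have s2: "summable (\<lambda>i. \<gamma> ^ i * EE \<theta> \<gamma> \<pi> (Suc t + i) x)"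
    by (rule summ_geo[OF assms]) (simp add: EE_bdd)
  have "(\<Sum>i. \<gamma> ^ Suc i * EE \<theta> \<gamma> \<pi> (t + Suc i) x) = (\<Sum>i. \<gamma> ^ i * EE \<theta> \<gamma> \<pi> (t + i) x) - EE \<theta> \<gamma> \<pi> t x"
    using suminf_split_head[OF s] by simp
  moreover have "(\<Sum>i. \<gamma> ^ Suc i * EE \<theta> \<gamma> \<pi> (t + Suc i) x) = \<gamma> * (\<Sum>i. \<gamma> ^ i * EE \<theta> \<gamma> \<pi> (Suc t + i) x)"
    using suminf_mult[OF s2, of \<gamma>] by (simp add: mult.assoc)
  ultimately show ?thesis by simp
qed

theorem lemma39:
  fixes d :: nat and \<theta> :: "real list" and \<gamma> :: real and \<pi> :: policy and T :: nat
  assumes "d \<ge> 2" and "length \<theta> = d - 1"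
    and "0 < \<gamma>" and "\<gamma> < 1"
    and "valid_policy d \<pi>"
  shows "measure_pmf.expectation (run \<theta> \<gamma> \<pi> T ([], False))
            (\<lambda>(h, s). regret d \<theta> \<gamma> \<pi> T h)
         \<ge> measure_pmf.expectation (run \<theta> \<gamma> \<pi> T ([], False))
            (\<lambda>(h, s). (\<Sum>t<T. Vstar d \<theta> \<gamma> (fst (h ! t)))
                       - 1 / (1 - \<gamma>) * (\<Sum>t<T. rew (fst (h ! t)) (snd (h ! t)))
                       - \<gamma> / (1 - \<gamma>)^2)"
proof -
  note g = assms(3,4)
  let ?p = "run \<theta> \<gamma> \<pi> T ([], False)"
  define A where "A y = (\<Sum>t<T. Vstar d \<theta> \<gamma> (fst (fst y ! t)))" for y :: "hist \<times> bool"
  define B where "B y = (\<Sum>t<T. Vpi \<theta> \<gamma> \<pi> (take t (fst y)) (fst (fst y ! t)))" for y :: "hist \<times> bool"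
  define C where "C y = (\<Sum>t<T. ind (fst (fst y ! t)))" for y :: "hist \<times> bool"
  define q where "q k = EE \<theta> \<gamma> \<pi> k ([], False)" for k
  define S where "S t = (\<Sum>i. \<gamma> ^ i * q (t + i))" for t
  have vb: "\<bar>Vstar d \<theta> \<gamma> b\<bar> \<le> \<bar>Vstar d \<theta> \<gamma> True\<bar> + \<bar>Vstar d \<theta> \<gamma> False\<bar>" for b
    by (cases b) auto
  have intV: "integrable (measure_pmf ?p) (\<lambda>y. Vstar d \<theta> \<gamma> (fst (fst y ! t)))" for t
    by (rule pmf_integrable_bdd[where B="\<bar>Vstar d \<theta> \<gamma> True\<bar> + \<bar>Vstar d \<theta> \<gamma> False\<bar>"])
       (rule vb)
  have intA: "integrable (measure_pmf ?p) A" unfolding A_def using intV by auto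
  have intVp: "integrable (measure_pmf ?p) (\<lambda>y. Vpi \<theta> \<gamma> \<pi> (take t (fst y)) (fst (fst y ! t)))" for t
    by (rule pmf_integrable_bdd[where B="1 / (1 - \<gamma>)"]) (rule Vpi_bdd[OF g])
  have intB: "integrable (measure_pmf ?p) B" unfolding B_def using intVp by auto
  have intI: "integrable (measure_pmf ?p) (\<lambda>y. ind (fst (fst y ! t)))" for t
    by (rule pmf_integrable_bdd[where B=1]) (rule ind_bdd)
  have intC: "integrable (measure_pmf ?p) C" unfolding C_def using intI by auto
  have EB: "measure_pmf.expectation ?p B = (\<Sum>t<T. S t)"
    unfolding B_def using intVp
  proof (simp, intro sum.cong[OF refl])
    fix t assume "t \<in> {..<T}"
    then have tT: "t < T" by simp
    have "measure_pmf.expectation ?p (\<lambda>y. Vpi \<theta> \<gamma> \<pi> (take t (fst y)) (fst (fst y ! t)))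
        = measure_pmf.expectation (run \<theta> \<gamma> \<pi> t ([], False)) (\<lambda>y. Vpi \<theta> \<gamma> \<pi> (fst y) (snd y))"
      by (rule exp_marg[OF tT, where f="Vpi \<theta> \<gamma> \<pi>"])
    also have "\<dots> = S t" unfolding S_def q_def by (rule exp_Vpi[OF g])
    finally show "measure_pmf.expectation ?p (\<lambda>y. Vpi \<theta> \<gamma> \<pi> (take t (fst y)) (fst (fst y ! t))) = S t" .
  qed
  have EC: "measure_pmf.expectation ?p C = (\<Sum>t<T. q t)"
    unfolding C_def using intI
  proof (simp, intro sum.cong[OF refl])
    fix t assume "t \<in> {..<T}"
    then have tT: "t < T" by simp
    show "measure_pmf.expectation ?p (\<lambda>y. ind (fst (fst y ! t))) = q t"
      unfolding q_def EE_def using exp_marg[OF tT, where f="\<lambda>h s. ind s"] by simp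
  qed
  have Sb: "0 \<le> S t" "S t \<le> 1 / (1 - \<gamma>)" for t
    unfolding S_def q_def by (rule sum_geo_bdd[OF g]; simp add: EE_bdd)+
  have Srec: "S t = q t + \<gamma> * S (Suc t)" for t
    unfolding S_def q_def using S_rec[OF g] by simp
  have key: "(\<Sum>t<T. S t) \<le> 1 / (1 - \<gamma>) * (\<Sum>t<T. q t) + \<gamma> / (1 - \<gamma>)^2"
    by (rule final_ineq[where S=S and q=q, OF g Srec Sb])
  have L: "measure_pmf.expectation ?p (\<lambda>(h, s). regret d \<theta> \<gamma> \<pi> T h)
        = measure_pmf.expectation ?p A - (\<Sum>t<T. S t)"
  proof -
    have "(\<lambda>(h, s). regret d \<theta> \<gamma> \<pi> T h) = (\<lambda>y. A y - B y)"
      by (auto simp: regret_def A_def B_def)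
    then show ?thesis using Bochner_Integration.integral_diff[OF intA intB] EB by simp
  qed
  have R: "measure_pmf.expectation ?p
            (\<lambda>(h, s). (\<Sum>t<T. Vstar d \<theta> \<gamma> (fst (h ! t)))
                       - 1 / (1 - \<gamma>) * (\<Sum>t<T. rew (fst (h ! t)) (snd (h ! t)))
                       - \<gamma> / (1 - \<gamma>)^2)
        = measure_pmf.expectation ?p A - 1 / (1 - \<gamma>) * (\<Sum>t<T. q t) - \<gamma> / (1 - \<gamma>)^2"
  proof -
    have "(\<lambda>(h, s). (\<Sum>t<T. Vstar d \<theta> \<gamma> (fst (h ! t)))
                       - 1 / (1 - \<gamma>) * (\<Sum>t<T. rew (fst (h ! t)) (snd (h ! t)))
                       - \<gamma> / (1 - \<gamma>)^2)
        = (\<lambda>y. (A y - 1 / (1 - \<gamma>) * C y) - \<gamma> / (1 - \<gamma>)^2)"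
      by (auto simp: A_def C_def rew_def ind_def)
    moreover have "integrable (measure_pmf ?p) (\<lambda>y. A y - 1 / (1 - \<gamma>) * C y)"
      using intA intC by simp
    ultimately show ?thesis
      using Bochner_Integration.integral_diff[OF intA integrable_mult_right[OF intC, of "1 / (1 - \<gamma>)"]] EC
      by (simp add: Bochner_Integration.integral_diff)
  qed
  show ?thesis unfolding L R using key by simp
qed

end
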